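(* There is a universal constant $C>0$ such that for all $a,b,U,V\in\mathbb{R}$ with $U>1$, $V>0$ and $|a|,|b|<V$, and for $k=0,1$, $$\int_{-U}^U\big|\mathcal{F}\big[(\cdot)^k\mathbf{1}_{[a,b]}\big](u)\big|du\le C\big(U^{2k-1}V^{k+1}+(1-k)\log U\big).$$
   Context: $\mathcal{F}f(u)=\int e^{iux}f(x)dx$; $(\cdot)^k\mathbf{1}_{[a,b]}$ is the function $x\mapsto x^k\mathbf{1}_{[a,b]}(x)$. *)

theory Defs
  imports "HOL-Analysis.Analysis"
begin

definition fourier :: "(real \<Rightarrow> complex) \<Rightarrow> real \<Rightarrow> complex" where
  "fourier f u = (LINT x|lborel. exp (\<i> * complex_of_real (u * x)) * f x)"

definition mon_ind :: "nat \<Rightarrow> real \<Rightarrow> real \<Rightarrow> real \<Rightarrow> complex" where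
  "mon_ind k a b x = complex_of_real (x ^ k * indicator {a..b} x)"

end

theory Submission
  imports Defs
begin


definition phi :: "nat \<Rightarrow> real \<Rightarrow> real \<Rightarrow> complex" where
  "phi k u x = exp (\<i> * complex_of_real (u * x)) * complex_of_real (x ^ k)"

lemma phi_cont: "continuous_on S (phi k u)"
  unfolding phi_def by (intro continuous_intros)

lemma F_eq:
  assumes "a \<le> b"
  shows "fourier (mon_ind k a b) u = integral {a..b} (phi k u)"
proof -
  have "fourier (mon_ind k a b) u = (LINT x|lborel. indicator {a..b} x *\<^sub>R phi k u x)"
    unfolding fourier_def mon_ind_def phi_def
    by (intro Bochner_Integration.integral_cong) (auto simp: indicator_def scaleR_conv_of_real)
  also have "\<dots> = integral {a..b} (phi k u)"
    using set_borel_integral_eq_integral(2)[of "{a..b}" "phi k u"]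
      borel_integrable_compact[OF compact_Icc phi_cont]
    by (simp add: set_integrable_def set_lebesgue_integral_def)
  finally show ?thesis .
qed

lemma F_empty:
  assumes "\<not> a \<le> b"
  shows "fourier (mon_ind k a b) u = 0"
  using assms unfolding fourier_def mon_ind_def by (simp add: indicator_def)

lemma bound1:
  assumes "\<bar>a\<bar> < V" "\<bar>b\<bar> < V"
  shows "cmod (fourier (mon_ind k a b) u) \<le> 2 * V ^ (k+1)"
proof (cases "a \<le> b")
  case True
  have V: "V > 0" using assms by linarith
  have "norm (integral {a..b} (phi k u)) \<le> V^k * (b - a)"
  proof (rule integral_bound[OF True phi_cont])
    fix t assume t: "t \<in> {a..b}"
    then have "\<bar>t\<bar> \<le> V" using assms by auto
    then have "\<bar>t\<bar>^k \<le> V^k" by (intro power_mono) auto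
    then show "norm (phi k u t) \<le> V^k"
      by (simp add: phi_def norm_mult norm_power)
  qed
  also have "\<dots> \<le> V^k * (2*V)" using assms V by (intro mult_left_mono) auto
  finally show ?thesis using F_eq[OF True] by (simp add: algebra_simps)
next
  case False
  then show ?thesis using assms F_empty[OF False] by simp
qed

lemma bound2:
  assumes "u \<noteq> 0"
  shows "cmod (fourier (mon_ind 0 a b) u) \<le> 2 / \<bar>u\<bar>"
proof (cases "a \<le> b")
  case True
  define G where "G x = exp (\<i> * complex_of_real (u * x)) / (\<i> * complex_of_real u)" for x
  have "(phi 0 u has_integral (G b - G a)) {a..b}"
  proof (rule fundamental_theorem_of_calculus[OF True])
    fix x assume "x \<in> {a..b}"
    have d: "((\<lambda>z. exp (\<i> * complex_of_real u * z) / (\<i> * complex_of_real u)) has_field_derivative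
        exp (\<i> * complex_of_real u * complex_of_real x)) (at (complex_of_real x))"
      apply (rule derivative_eq_intros refl | simp)+
      using assms by (auto simp: field_simps)
    have e: "G = (\<lambda>y. (\<lambda>z. exp (\<i> * complex_of_real u * z) / (\<i> * complex_of_real u)) (complex_of_real y))"
      unfolding G_def by (auto simp: fun_eq_iff mult.assoc)
    show "(G has_vector_derivative phi 0 u x) (at x within {a..b})"
      unfolding e using has_vector_derivative_real_field[OF d] by (simp add: phi_def mult.assoc)
  qed
  then have "fourier (mon_ind 0 a b) u = G b - G a"
    using F_eq[OF True] by (simp add: integral_unique)
  moreover have "cmod (G b - G a) \<le> 2 / \<bar>u\<bar>"
  proof -
    have t: "cmod (G b - G a) \<le> cmod (G b) + cmod (G a)" by (rule norm_triangle_ineq4)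
    have n: "cmod (G x) = 1 / \<bar>u\<bar>" for x
      unfolding G_def using assms by (simp add: norm_divide norm_mult)
    show ?thesis using t by (simp add: n)
  qed
  ultimately show ?thesis by simp
next
  case False
  then show ?thesis using F_empty[OF False] by simp
qed

lemma int_bound:
  fixes f g :: "real \<Rightarrow> real"
  assumes U: "U > 0" and le: "\<And>u. u \<in> {-U..U} \<Longrightarrow> f u \<le> g u"
    and g: "(g has_integral I) {-U..U}" and I: "I \<ge> 0"
  shows "(LBINT u=-U..U. f u) \<le> I"
proof -
  have eq: "(LBINT u=-U..U. f u) = (LBINT u:{-U..U}. f u)"
    using U by (intro interval_integral_Icc) simp
  show ?thesis
  proof (cases "set_integrable lborel {-U..U} f")
    case True
    have "(LBINT u:{-U..U}. f u) = integral {-U..U} f"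
      using set_borel_integral_eq_integral(2)[OF True] .
    also have "\<dots> \<le> integral {-U..U} g"
      using set_borel_integral_eq_integral(1)[OF True] g le
      by (intro integral_le) auto
    also have "\<dots> = I" using g by (rule integral_unique)
    finally show ?thesis using eq by simp
  next
    case False
    then have "(LBINT u:{-U..U}. f u) = 0"
      unfolding set_integrable_def set_lebesgue_integral_def
      by (rule not_integrable_integral_eq)
    then show ?thesis using eq I by simp
  qed
qed

lemma g0_int:
  fixes U V :: real
  assumes U: "U > 0" and V: "V > 0"
  shows "((\<lambda>u. 4 * V / (1 + V * \<bar>u\<bar>)) has_integral (8 * ln (1 + U * V))) {-U..U}"
proof -
  have r: "((\<lambda>u. 4 * V / (1 + V * \<bar>u\<bar>)) has_integral (4 * ln (1 + V * U) - 4 * ln (1 + V * 0))) {0..U}"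
  proof (rule fundamental_theorem_of_calculus)
    show "0 \<le> U" using U by simp
    fix x :: real assume x: "x \<in> {0..U}"
    have p: "1 + V * x > 0" using x V by (simp add: add_pos_nonneg)
    show "((\<lambda>u. 4 * ln (1 + V * u)) has_vector_derivative 4 * V / (1 + V * \<bar>x\<bar>)) (at x within {0..U})"
      unfolding has_real_derivative_iff_has_vector_derivative[symmetric]
      using x p by (auto intro!: derivative_eq_intros)
  qed
  have l: "((\<lambda>u. 4 * V / (1 + V * \<bar>u\<bar>)) has_integral (- 4 * ln (1 - V * 0) - (- 4 * ln (1 - V * (-U))))) {-U..0}"
  proof (rule fundamental_theorem_of_calculus)
    show "-U \<le> 0" using U by simp
    fix x :: real assume x: "x \<in> {-U..0}"
    have "V * x \<le> 0" using x V by (simp add: mult_nonneg_nonpos)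
    then have p: "1 - V * x > 0" by linarith
    show "((\<lambda>u. - 4 * ln (1 - V * u)) has_vector_derivative 4 * V / (1 + V * \<bar>x\<bar>)) (at x within {-U..0})"
      unfolding has_real_derivative_iff_has_vector_derivative[symmetric]
      using x p by (auto intro!: derivative_eq_intros simp: field_simps)
  qed
  have "((\<lambda>u. 4 * V / (1 + V * \<bar>u\<bar>)) has_integral (4 * ln (1 + V * U) + (4 * ln (1 + V * U)))) {-U..U}"
    using has_integral_combine[of "-U" 0 U, OF _ _ l r] U by simp
  then show ?thesis by (simp add: mult.commute)
qed

lemma main_k:
  fixes a b U V :: real and k :: nat
  assumes U: "U > 1" and V: "V > 0" and a: "\<bar>a\<bar> < V" and b: "\<bar>b\<bar> < V" and k: "k \<le> 1"
  shows "(LBINT u=ereal (-U)..ereal U. cmod (fourier (mon_ind k a b) u))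
       \<le> 16 * (U powr (2 * real k - 1) * V ^ (k + 1) + (1 - real k) * ln U)"
proof -
  show ?thesis
  proof (cases "k = 0")
    case True
    have le: "cmod (fourier (mon_ind 0 a b) u) \<le> 4 * V / (1 + V * \<bar>u\<bar>)" for u
    proof -
      have b1: "cmod (fourier (mon_ind 0 a b) u) \<le> 2 * V" using bound1[OF a b, of 0 u] by simp
      have pos: "1 + V * \<bar>u\<bar> > 0" using V by (simp add: add_pos_nonneg)
      show ?thesis
      proof (cases "V * \<bar>u\<bar> \<le> 1")
        case True
        have "2 * V \<le> 4 * V / (1 + V * \<bar>u\<bar>)"
          using pos True V by (simp add: field_simps)
        then show ?thesis using b1 by linarith
      next
        case False
        then have u: "u \<noteq> 0" by auto
        have "2 / \<bar>u\<bar> \<le> 4 * V / (1 + V * \<bar>u\<bar>)"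
          using pos False V u by (simp add: field_simps)
        then show ?thesis using bound2[OF u, of a b] by linarith
      qed
    qed
    have "(LBINT u=-U..U. cmod (fourier (mon_ind 0 a b) u)) \<le> 8 * ln (1 + U * V)"
      using U V by (intro int_bound[OF _ le g0_int]) auto
    also have "\<dots> \<le> 16 * (V / U + ln U)"
    proof -
      have "1 < U * U" using U by (simp add: less_1_mult)
      then have "1 + U * V \<le> U * (U + V)" by (simp add: algebra_simps)
      then have "ln (1 + U * V) \<le> ln (U * (U + V))"
        using U V by (intro ln_mono) (auto simp: add_pos_pos)
      also have "\<dots> = ln U + ln U + ln (1 + V / U)"
      proof -
        have e: "U * (U + V) = U * (U * (1 + V / U))" using U by (simp add: field_simps)
        have p: "1 + V / U > 0" using U V by (simp add: add_pos_pos)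
        show ?thesis unfolding e using U p by (simp add: ln_mult)
      qed
      also have "ln (1 + V / U) \<le> V / U" using U V by (intro ln_add_one_self_le_self) simp
      finally have "ln (1 + U * V) \<le> 2 * ln U + V / U" by simp
      moreover have "V / U \<ge> 0" using U V by simp
      ultimately show ?thesis unfolding distrib_left by linarith
    qed
    finally show ?thesis using True U by (simp add: powr_minus_divide)
  next
    case False
    then have k1: "k = 1" using k by simp
    have "(LBINT u=-U..U. cmod (fourier (mon_ind 1 a b) u)) \<le> 2 * V ^ 2 * (U - (-U))"
    proof (rule int_bound[where g="\<lambda>_. 2 * V ^ 2"])
      show "U > 0" using U by simp
      show "cmod (fourier (mon_ind 1 a b) u) \<le> 2 * V ^ 2" for u
        using bound1[OF a b, of 1 u] by (simp add: power2_eq_square)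
      have "((\<lambda>_. 2 * V ^ 2) has_integral (Henstock_Kurzweil_Integration.content {-U..U}) *\<^sub>R (2 * V ^ 2)) {-U..U}"
        by (rule has_integral_const_real)
      then show "((\<lambda>_. 2 * V ^ 2) has_integral 2 * V ^ 2 * (U - (-U))) {-U..U}"
        using U by (simp add: mult.commute)
      show "0 \<le> 2 * V ^ 2 * (U - - U)" using U by simp
    qed
    also have "\<dots> \<le> 16 * (U powr (2 * real k - 1) * V ^ (k + 1) + (1 - real k) * ln U)"
      using k1 U V by (simp add: power2_eq_square)
    finally show ?thesis using k1 by simp
  qed
qed

theorem lemma3p6:
  shows "\<exists>C>0. \<forall>a b U V :: real. \<forall>k :: nat.
     U > 1 \<longrightarrow> V > 0 \<longrightarrow> \<bar>a\<bar> < V \<longrightarrow> \<bar>b\<bar> < V \<longrightarrow> k \<le> 1 \<longrightarrow>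
     (LBINT u=-U..U. cmod (fourier (mon_ind k a b) u))
       \<le> C * (U powr (2 * real k - 1) * V ^ (k + 1) + (1 - real k) * ln U)"
proof (intro exI[of _ 16] conjI allI impI)
  show "(16::real) > 0" by simp
next
  fix a b U V :: real and k :: nat
  assume h: "U > 1" "V > 0" "\<bar>a\<bar> < V" "\<bar>b\<bar> < V" "k \<le> 1"
  have e: "- ereal U = ereal (-U)" by simp
  show "(LBINT u=- ereal U..ereal U. cmod (fourier (mon_ind k a b) u))
       \<le> 16 * (U powr (2 * real k - 1) * V ^ (k + 1) + (1 - real k) * ln U)"
    unfolding e by (rule main_k[OF h])
qed

end
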